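(* Let $a_1,\dots,a_n\in\mathbb R^d$ be orthonormal ($n\le d$), $T=\sum_{i=1}^n a_i^{\otimes4}$, and $f(x)=\langle T,x^{\otimes4}\rangle$ restricted to the unit sphere $S^{d-1}$. Then every local maximum of $f$ on $S^{d-1}$ is a global maximum; i.e., the local maxima of $f$ on $S^{d-1}$ are exactly $\pm a_1,\dots,\pm a_n$.
   Context: $a^{\otimes4}$ denotes the 4-th order tensor with entries $a_ia_ja_ka_l$; $\langle T,S\rangle$ is the entrywise inner product of tensors. A local maximum on $S^{d-1}$ is a point $x\in S^{d-1}$ having a neighborhood $N$ in $S^{d-1}$ with $f(y)\le f(x)$ for all $y\in N$. *)

theory Defs
  imports "HOL-Analysis.Analysis"
begin

definition tensor4 :: "real^'d \<Rightarrow> 'd \<Rightarrow> 'd \<Rightarrow> 'd \<Rightarrow> 'd \<Rightarrow> real" where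
  "tensor4 a i j k l = a$i * a$j * a$k * a$l"

definition tinner :: "('d::finite \<Rightarrow> 'd \<Rightarrow> 'd \<Rightarrow> 'd \<Rightarrow> real) \<Rightarrow> ('d \<Rightarrow> 'd \<Rightarrow> 'd \<Rightarrow> 'd \<Rightarrow> real) \<Rightarrow> real" where
  "tinner T S = (\<Sum>i\<in>UNIV. \<Sum>j\<in>UNIV. \<Sum>k\<in>UNIV. \<Sum>l\<in>UNIV. T i j k l * S i j k l)"

definition local_max_on :: "('a::topological_space \<Rightarrow> real) \<Rightarrow> 'a set \<Rightarrow> 'a \<Rightarrow> bool" where
  "local_max_on f S x \<longleftrightarrow> x \<in> S \<and>
     (\<exists>N. openin (top_of_set S) N \<and> x \<in> N \<and> (\<forall>y\<in>N. f y \<le> f x))"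

end

theory Submission
  imports Defs
begin


lemma proj:
  fixes a :: "nat \<Rightarrow> real^'d"
  assumes orth: "\<forall>i<n. \<forall>j<n. a i \<bullet> a j = (if i = j then 1 else 0)" and k: "k < n"
  shows "a k \<bullet> (\<Sum>i<n. b i *\<^sub>R a i) = b k"
proof -
  have "a k \<bullet> (\<Sum>i<n. b i *\<^sub>R a i) = (\<Sum>i<n. b i * (if k = i then 1 else 0))"
    by (simp add: inner_sum_right orth k)
  also have "\<dots> = (\<Sum>i<n. if k = i then b i else 0)" by (intro sum.cong) auto
  also have "\<dots> = b k" using k by simp
  finally show ?thesis .
qed

lemma sumsq:
  fixes a :: "nat \<Rightarrow> real^'d"
  assumes orth: "\<forall>i<n. \<forall>j<n. a i \<bullet> a j = (if i = j then 1 else 0)"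
  shows "(\<Sum>i<n. b i *\<^sub>R a i) \<bullet> (\<Sum>i<n. b i *\<^sub>R a i) = (\<Sum>i<n. (b i)^2)"
  by (simp add: inner_sum_left proj[OF orth] power2_eq_square)

lemma bessel:
  fixes a :: "nat \<Rightarrow> real^'d"
  assumes orth: "\<forall>i<n. \<forall>j<n. a i \<bullet> a j = (if i = j then 1 else 0)"
  shows "(\<Sum>i<n. (a i \<bullet> y)^2) \<le> y \<bullet> y"
proof -
  define P where "P = (\<Sum>i<n. (a i \<bullet> y) *\<^sub>R a i)"
  have yP: "y \<bullet> P = (\<Sum>i<n. (a i \<bullet> y)^2)"
    unfolding P_def by (simp add: inner_sum_right power2_eq_square inner_commute)
  have PP: "P \<bullet> P = (\<Sum>i<n. (a i \<bullet> y)^2)" unfolding P_def by (rule sumsq[OF orth])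
  have "0 \<le> (y - P) \<bullet> (y - P)" by simp
  also have "\<dots> = y \<bullet> y - 2 * (y \<bullet> P) + P \<bullet> P" by (simp add: algebra_simps inner_commute)
  finally show ?thesis using yP PP by simp
qed


lemma poly_small:
  fixes A B C D d :: real
  assumes d: "d > 0" and H: "\<And>t. \<bar>t\<bar> < d \<Longrightarrow> A*t + B*t^2 + C*t^3 + D*t^4 \<le> 0"
  shows "A = 0 \<and> B \<le> 0"
proof -
  have lim1: "((\<lambda>t. A + B*t + C*t^2 + D*t^3) \<longlongrightarrow> A + B*0 + C*0^2 + D*0^3) (at 0 within S)" for S
    by (intro tendsto_intros)
  have e1: "eventually (\<lambda>t. A + B*t + C*t^2 + D*t^3 \<le> 0) (at_right 0)"
  proof -
    have "eventually (\<lambda>t. t \<in> {0<..<d}) (at_right 0)" using eventually_at_right_real d by blast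
    then show ?thesis
    proof (rule eventually_mono)
      fix t assume t: "t \<in> {0<..<d}"
      then have "t * (A + B*t + C*t^2 + D*t^3) \<le> 0" using H[of t]
        by (simp add: algebra_simps power2_eq_square power3_eq_cube power4_eq_xxxx)
      with t show "A + B*t + C*t^2 + D*t^3 \<le> 0" by (simp add: mult_le_0_iff)
    qed
  qed
  have e2: "eventually (\<lambda>t. A + B*t + C*t^2 + D*t^3 \<ge> 0) (at_left 0)"
  proof -
    have "eventually (\<lambda>t. t \<in> {-d<..<0}) (at_left 0)" using eventually_at_left_real[of "-d" 0] d by simp
    then show ?thesis
    proof (rule eventually_mono)
      fix t assume t: "t \<in> {-d<..<0}"
      then have "t * (A + B*t + C*t^2 + D*t^3) \<le> 0" using H[of t]
        by (simp add: algebra_simps power2_eq_square power3_eq_cube power4_eq_xxxx)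
      with t show "A + B*t + C*t^2 + D*t^3 \<ge> 0" by (simp add: mult_le_0_iff)
    qed
  qed
  have "A \<le> 0" using tendsto_upperbound[OF lim1 e1] by simp
  moreover have "A \<ge> 0" using tendsto_lowerbound[OF lim1 e2] by simp
  ultimately have A0: "A = 0" by simp
  have lim2: "((\<lambda>t. B + C*t + D*t^2) \<longlongrightarrow> B + C*0 + D*0^2) (at 0 within S)" for S
    by (intro tendsto_intros)
  have e3: "eventually (\<lambda>t. B + C*t + D*t^2 \<le> 0) (at_right 0)"
  proof -
    have "eventually (\<lambda>t. t \<in> {0<..<d}) (at_right 0)" using eventually_at_right_real d by blast
    then show ?thesis
    proof (rule eventually_mono)
      fix t assume t: "t \<in> {0<..<d}"
      then have "t^2 * (B + C*t + D*t^2) \<le> 0" using H[of t] A0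
        by (simp add: algebra_simps power2_eq_square power3_eq_cube power4_eq_xxxx)
      with t show "B + C*t + D*t^2 \<le> 0" by (simp add: mult_le_0_iff)
    qed
  qed
  have "B \<le> 0" using tendsto_upperbound[OF lim2 e3] by simp
  with A0 show ?thesis by simp
qed


definition Cf :: "(nat \<Rightarrow> real^'d) \<Rightarrow> nat \<Rightarrow> real^'d \<Rightarrow> real" where
  "Cf a n z = (\<Sum>i<n. (a i \<bullet> z)^4)"

lemma Cf_scale: "Cf a n (r *\<^sub>R z) = r^4 * Cf a n z"
  by (simp add: Cf_def sum_distrib_left power_mult_distrib)

lemma stepK:
  fixes x :: "real^'d"
  assumes x: "norm x = 1" and e: "e > 0"
    and loc: "\<forall>y. norm y = 1 \<longrightarrow> dist y x < e \<longrightarrow> Cf a n y \<le> Cf a n x"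
  shows "\<exists>d>0. \<forall>z. norm (z - x) < d \<longrightarrow> Cf a n z \<le> Cf a n x * (z \<bullet> z)^2"
proof (intro exI[of _ "min (e/2) (1/2)"] conjI allI impI)
  show "0 < min (e/2) (1/2::real)" using e by simp
  fix z assume z: "norm (z - x) < min (e/2) (1/2)"
  have "\<bar>norm z - norm x\<bar> \<le> norm (z - x)" by (rule norm_triangle_ineq3)
  then have nz: "\<bar>norm z - 1\<bar> < min (e/2) (1/2)" using z x by simp
  then have "\<bar>norm z - 1\<bar> < 1/2" by simp
  then have "norm z > 1/2" by linarith
  then have zpos: "norm z > 0" by linarith
  define y where "y = (1 / norm z) *\<^sub>R z"
  have ny: "norm y = 1" using zpos by (simp add: y_def)
  have "y - z = (1 / norm z - 1) *\<^sub>R z" by (simp add: y_def algebra_simps)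
  then have "norm (y - z) = \<bar>1 / norm z - 1\<bar> * norm z" by simp
  also have "\<dots> = \<bar>(1 / norm z - 1) * norm z\<bar>" using zpos by (simp add: abs_mult)
  also have "\<dots> = \<bar>1 - norm z\<bar>" using zpos by (simp add: algebra_simps)
  finally have "norm (y - z) = \<bar>1 - norm z\<bar>" .
  then have "dist y x \<le> \<bar>1 - norm z\<bar> + norm (z - x)"
    using norm_triangle_ineq[of "y - z" "z - x"] by (simp add: dist_norm)
  also have "\<dots> < e" using nz z by (simp add: abs_minus_commute)
  finally have "Cf a n y \<le> Cf a n x" using loc ny by blast
  then have "(1/norm z)^4 * Cf a n z \<le> Cf a n x" by (simp add: y_def Cf_scale)
  then have "Cf a n z \<le> Cf a n x * (norm z)^4" using zpos
    by (simp add: field_simps)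
  also have "(norm z)^4 = (z \<bullet> z)^2"
    by (simp add: power2_norm_eq_inner[symmetric] power_mult[symmetric])
  finally show "Cf a n z \<le> Cf a n x * (z \<bullet> z)^2" .
qed

lemma stepT:
  fixes x :: "real^'d"
  assumes "\<exists>d>0. \<forall>z. norm (z - x) < d \<longrightarrow> Cf a n z \<le> Cf a n x * (z \<bullet> z)^2"
  shows "\<exists>d>0. \<forall>t. \<bar>t\<bar> < d \<longrightarrow> Cf a n (x + t *\<^sub>R v) \<le> Cf a n x * ((x + t *\<^sub>R v) \<bullet> (x + t *\<^sub>R v))^2"
proof -
  obtain d where d: "d > 0" "\<forall>z. norm (z - x) < d \<longrightarrow> Cf a n z \<le> Cf a n x * (z \<bullet> z)^2"
    using assms by blast
  show ?thesis
  proof (intro exI[of _ "d / (norm v + 1)"] conjI allI impI)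
    show "0 < d / (norm v + 1)" using d(1) by (simp add: add_nonneg_pos)
    fix t assume t: "\<bar>t\<bar> < d / (norm v + 1)"
    have "\<bar>t\<bar> * norm v \<le> \<bar>t\<bar> * (norm v + 1)" by (simp add: mult_left_mono)
    also have "\<dots> < d" using t by (simp add: pos_less_divide_eq add_nonneg_pos)
    finally have "norm ((x + t *\<^sub>R v) - x) < d" by simp
    then show "Cf a n (x + t *\<^sub>R v) \<le> Cf a n x * ((x + t *\<^sub>R v) \<bullet> (x + t *\<^sub>R v))^2"
      using d by blast
  qed
qed


lemma main_dir:
  fixes a :: "nat \<Rightarrow> real^'d" and x :: "real^'d"
  assumes orth: "\<forall>i<n. \<forall>j<n. a i \<bullet> a j = (if i = j then 1 else 0)" and n1: "n \<ge> 1"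
    and x: "norm x = 1"
    and K: "\<exists>d>0. \<forall>z. norm (z - x) < d \<longrightarrow> Cf a n z \<le> Cf a n x * (z \<bullet> z)^2"
  shows "\<exists>j<n. x = a j \<or> x = - a j"
proof -
  note T = stepT[OF K]
  define F where "F = Cf a n x"
  define c where "c i = a i \<bullet> x" for i
  have xx: "x \<bullet> x = 1" using x by (simp add: power2_norm_eq_inner[symmetric])
  have F_eq: "F = (\<Sum>i<n. (c i)^4)" by (simp add: F_def Cf_def c_def)
  have Fpos: "F > 0"
  proof (rule ccontr)
    assume "\<not> F > 0"
    have "(\<Sum>i<n. (c i)^4) \<ge> 0" by (intro sum_nonneg) simp
    then have "(\<Sum>i<n. (c i)^4) = 0" using F_eq \<open>\<not> F > 0\<close> by linarith
    then have c0: "\<forall>i<n. c i = 0" by (simp add: sum_nonneg_eq_0_iff)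
    obtain d where d: "d > 0" "\<forall>t. \<bar>t\<bar> < d \<longrightarrow> Cf a n (x + t *\<^sub>R a 0) \<le> F * ((x + t *\<^sub>R a 0) \<bullet> (x + t *\<^sub>R a 0))^2"
      using T[of "a 0"] F_def by blast
    have "Cf a n (x + t *\<^sub>R a 0) = t^4" for t
    proof -
      have "Cf a n (x + t *\<^sub>R a 0) = (\<Sum>i<n. if i = 0 then t^4 else 0)"
        unfolding Cf_def using c0 orth n1 by (intro sum.cong) (auto simp: inner_add_right c_def)
      also have "\<dots> = t^4" using n1 by simp
      finally show ?thesis .
    qed
    moreover have "F = 0" using \<open>(\<Sum>i<n. (c i)^4) = 0\<close> F_eq by simp
    ultimately have "(d/2)^4 \<le> 0" using d(2)[rule_format, of "d/2"] d(1) by simp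
    with d(1) show False by simp
  qed
  define P where "P = (\<Sum>i<n. c i *\<^sub>R a i)"
  define w where "w = x - P"
  have aP: "a k \<bullet> P = c k" if "k < n" for k using proj[OF orth that] P_def by simp
  have aw: "a k \<bullet> w = 0" if "k < n" for k using aP[OF that] by (simp add: w_def inner_diff_right c_def)
  have Pw: "P \<bullet> w = 0" unfolding P_def by (simp add: inner_sum_left aw)
  have w0: "w = 0"
  proof (rule ccontr)
    assume "w \<noteq> 0"
    then have W: "w \<bullet> w > 0" by simp
    obtain d where d: "d > 0" "\<forall>t. \<bar>t\<bar> < d \<longrightarrow> Cf a n (x + t *\<^sub>R w) \<le> F * ((x + t *\<^sub>R w) \<bullet> (x + t *\<^sub>R w))^2"
      using T[of w] F_def by blast
    define t where "t = - min (d/2) (1/2)"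
    have t: "\<bar>t\<bar> < d" "t < 0" "t > -1" using d(1) by (auto simp: t_def)
    have "Cf a n (x + t *\<^sub>R w) = F" unfolding Cf_def F_eq
      by (intro sum.cong) (auto simp: inner_add_right aw c_def)
    moreover have xw: "x \<bullet> w = w \<bullet> w" unfolding w_def
      by (metis Pw add_diff_cancel_left' diff_add_cancel inner_add_left inner_commute w_def add_0)
    have zz: "(x + t *\<^sub>R w) \<bullet> (x + t *\<^sub>R w) = 1 + (2*t + t^2) * (w \<bullet> w)"
      using xx xw by (simp add: algebra_simps inner_commute power2_eq_square)
    have "t * (2 + t) < 0" using t by (intro mult_neg_pos) auto
    then have "(2*t + t^2) < 0" by (simp add: power2_eq_square algebra_simps)
    then have lt1: "(x + t *\<^sub>R w) \<bullet> (x + t *\<^sub>R w) < 1" using zz W by (simp add: mult_neg_pos)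
    have ge0: "0 \<le> (x + t *\<^sub>R w) \<bullet> (x + t *\<^sub>R w)" by simp
    have q: "((x + t *\<^sub>R w) \<bullet> (x + t *\<^sub>R w))^2 < 1" using lt1 ge0
      by (simp add: power_less_one_iff)
    have "F * ((x + t *\<^sub>R w) \<bullet> (x + t *\<^sub>R w))^2 < F * 1"
      using q Fpos by (rule mult_strict_left_mono)
    moreover have "Cf a n (x + t *\<^sub>R w) \<le> F * ((x + t *\<^sub>R w) \<bullet> (x + t *\<^sub>R w))^2"
      using d(2) t(1) by blast
    ultimately show False using \<open>Cf a n (x + t *\<^sub>R w) = F\<close> by linarith
  qed
  then have xP: "x = P" by (simp add: w_def)
  have sum1: "(\<Sum>i<n. (c i)^2) = 1" using xx xP sumsq[OF orth, of c] P_def by simp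
  have pair: "(c j)^2 = (c k)^2 \<and> 12 * (c j)^2 * (c k)^2 - 2 * F * ((c j)^2 + (c k)^2) \<le> 0"
    if jk: "j < n" "k < n" "j \<noteq> k" "c j \<noteq> 0" "c k \<noteq> 0" for j k
  proof -
    define v where "v = c k *\<^sub>R a j - c j *\<^sub>R a k"
    obtain d where d: "d > 0" "\<forall>t. \<bar>t\<bar> < d \<longrightarrow> Cf a n (x + t *\<^sub>R v) \<le> F * ((x + t *\<^sub>R v) \<bullet> (x + t *\<^sub>R v))^2"
      using T[of v] F_def by blast
    define s where "s = (c j)^2 + (c k)^2"
    have av: "a i \<bullet> v = (if i = j then c k else if i = k then - c j else 0)" if "i < n" for i
      using orth that jk by (auto simp: v_def inner_diff_right)
    have xv: "x \<bullet> v = 0" using jk by (simp add: v_def inner_diff_right c_def inner_commute)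
    have vv: "v \<bullet> v = s" using orth jk
      by (simp add: v_def inner_diff_right inner_diff_left s_def power2_eq_square inner_commute)
    have zz: "(x + t *\<^sub>R v) \<bullet> (x + t *\<^sub>R v) = 1 + t^2 * s" for t
      using xx xv vv by (simp add: algebra_simps inner_commute power2_eq_square)
    have Cz: "Cf a n (x + t *\<^sub>R v) = F + (((c j + t * c k)^4 - (c j)^4) + ((c k - t * c j)^4 - (c k)^4))" for t
    proof -
      have "Cf a n (x + t *\<^sub>R v) - F = (\<Sum>i<n. (a i \<bullet> (x + t *\<^sub>R v))^4 - (c i)^4)"
        by (simp add: Cf_def F_eq sum_subtractf)
      also have "\<dots> = (\<Sum>i<n. (if i = j then (c j + t * c k)^4 - (c j)^4 else 0)
                          + (if i = k then (c k - t * c j)^4 - (c k)^4 else 0))"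
        using jk by (intro sum.cong refl) (auto simp: inner_add_right av c_def)
      also have "\<dots> = ((c j + t * c k)^4 - (c j)^4) + ((c k - t * c j)^4 - (c k)^4)"
        using jk by (simp add: sum.distrib)
      finally show ?thesis by simp
    qed
    have "\<forall>t. \<bar>t\<bar> < d \<longrightarrow> (4 * c j * c k * ((c j)^2 - (c k)^2)) * t + (12 * (c j)^2 * (c k)^2 - 2 * F * s) * t^2
          + (4 * c j * (c k)^3 - 4 * c k * (c j)^3) * t^3 + ((c k)^4 + (c j)^4 - F * s^2) * t^4 \<le> 0"
    proof (intro allI impI)
      fix t :: real assume "\<bar>t\<bar> < d"
      then have "Cf a n (x + t *\<^sub>R v) \<le> F * (1 + t^2 * s)^2" using d(2) zz by simp
      then have "((c j + t * c k)^4 - (c j)^4) + ((c k - t * c j)^4 - (c k)^4) - F * ((1 + t^2 * s)^2 - 1) \<le> 0"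
        using Cz[of t] by (simp add: algebra_simps)
      moreover have "((c j + t * c k)^4 - (c j)^4) + ((c k - t * c j)^4 - (c k)^4) - F * ((1 + t^2 * s)^2 - 1)
        = (4 * c j * c k * ((c j)^2 - (c k)^2)) * t + (12 * (c j)^2 * (c k)^2 - 2 * F * s) * t^2
          + (4 * c j * (c k)^3 - 4 * c k * (c j)^3) * t^3 + ((c k)^4 + (c j)^4 - F * s^2) * t^4"
        by algebra
      ultimately show "(4 * c j * c k * ((c j)^2 - (c k)^2)) * t + (12 * (c j)^2 * (c k)^2 - 2 * F * s) * t^2
          + (4 * c j * (c k)^3 - 4 * c k * (c j)^3) * t^3 + ((c k)^4 + (c j)^4 - F * s^2) * t^4 \<le> 0" by simp
    qed
    from poly_small[OF d(1) this[rule_format]]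
    have A: "4 * c j * c k * ((c j)^2 - (c k)^2) = 0" and B: "12 * (c j)^2 * (c k)^2 - 2 * F * s \<le> 0"
      by auto
    from A jk have "(c j)^2 = (c k)^2" by simp
    with B show ?thesis by (simp add: s_def)
  qed
  obtain j where j: "j < n" "c j \<noteq> 0"
  proof (rule ccontr)
    assume "\<not> thesis"
    then have "\<forall>i<n. c i = 0" using that by blast
    then have "F = 0" using F_eq by simp
    with Fpos show False by simp
  qed
  define u where "u = (c j)^2"
  have upos: "u > 0" using j by (simp add: u_def)
  have csq: "(c i)^2 = u" if "i < n" "c i \<noteq> 0" for i
    using pair[of j i] that j by (cases "i = j") (auto simp: u_def)
  have "F = (\<Sum>i<n. u * (c i)^2)"
    unfolding F_eq
  proof (intro sum.cong refl)
    fix i assume "i \<in> {..<n}"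
    then show "(c i)^4 = u * (c i)^2" using csq[of i]
      by (cases "c i = 0") (auto simp: power4_eq_xxxx power2_eq_square)
  qed
  then have Fu: "F = u" using sum1 by (simp add: sum_distrib_left[symmetric])
  have others: "c i = 0" if "i < n" "i \<noteq> j" for i
  proof (rule ccontr)
    assume ci: "c i \<noteq> 0"
    from pair[OF j(1) that(1) _ j(2) ci] that(2)
    have "12 * u * u - 2 * F * (u + u) \<le> 0" using csq[OF that(1) ci] by (simp add: u_def)
    then have "8 * (u * u) \<le> 0" using Fu by (simp add: algebra_simps)
    moreover have "u * u > 0" using upos by simp
    ultimately show False by linarith
  qed
  have "P = (\<Sum>i<n. if i = j then c j *\<^sub>R a j else 0)"
    unfolding P_def by (intro sum.cong refl) (auto simp: others)
  then have xj: "x = c j *\<^sub>R a j" using xP j by simp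
  have "(\<Sum>i<n. (c i)^2) = (\<Sum>i<n. if i = j then (c j)^2 else 0)"
    by (intro sum.cong refl) (auto simp: others)
  then have "(c j)^2 = 1" using sum1 j by simp
  then have "c j = 1 \<or> c j = -1" by (simp add: power2_eq_1_iff)
  then show ?thesis using xj j by auto
qed


lemma pow4_sum: "(\<Sum>p\<in>A. g p)^4 = (\<Sum>p\<in>A. \<Sum>q\<in>A. \<Sum>r\<in>A. \<Sum>s\<in>A. g p * g q * g r * (g s::real))"
  by (simp add: power4_eq_xxxx sum_distrib_left sum_distrib_right mult_ac)

lemma f_eq: "tinner (\<lambda>p q r s. \<Sum>i<n. tensor4 (a i) p q r s) (tensor4 (x::real^'d)) = (\<Sum>i<n. (a i \<bullet> x)^4)"
proof -
  have "tinner (\<lambda>p q r s. \<Sum>i<n. tensor4 (a i) p q r s) (tensor4 x) =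
     (\<Sum>p\<in>UNIV. \<Sum>q\<in>UNIV. \<Sum>r\<in>UNIV. \<Sum>s\<in>UNIV. \<Sum>i<n. (a i$p*x$p)*(a i$q*x$q)*(a i$r*x$r)*(a i$s*x$s))"
    unfolding tinner_def tensor4_def
    apply (intro sum.cong refl)
    by (simp add: sum_distrib_right mult_ac) (simp add: sum_distrib_left)
  also have "\<dots> = (\<Sum>i<n. \<Sum>p\<in>UNIV. \<Sum>q\<in>UNIV. \<Sum>r\<in>UNIV. \<Sum>s\<in>UNIV. (a i$p*x$p)*(a i$q*x$q)*(a i$r*x$r)*(a i$s*x$s))"
    by (simp add: sum.swap[of _ "{..<n}"])
  also have "\<dots> = (\<Sum>i<n. (a i \<bullet> x)^4)"
    unfolding inner_vec_def by (simp only: pow4_sum inner_real_def)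
  finally show ?thesis .
qed

lemma Cf_le1:
  fixes a :: "nat \<Rightarrow> real^'d"
  assumes orth: "\<forall>i<n. \<forall>j<n. a i \<bullet> a j = (if i = j then 1 else 0)" and y: "norm y = 1"
  shows "Cf a n y \<le> 1"
proof -
  have yy: "y \<bullet> y = 1" using y by (simp add: power2_norm_eq_inner[symmetric])
  have S: "(\<Sum>i<n. (a i \<bullet> y)^2) \<le> 1" using bessel[OF orth, of y] yy by simp
  have each: "(a i \<bullet> y)^2 \<le> 1" if "i < n" for i
  proof -
    have "(a i \<bullet> y)^2 \<le> (\<Sum>i<n. (a i \<bullet> y)^2)"
      by (rule member_le_sum) (use that in auto)
    with S show ?thesis by simp
  qed
  have "Cf a n y \<le> (\<Sum>i<n. (a i \<bullet> y)^2)" unfolding Cf_def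
  proof (rule sum_mono)
    fix i assume "i \<in> {..<n}"
    then have h: "(a i \<bullet> y)^2 \<le> 1" using each by simp
    have "(a i \<bullet> y)^4 = (a i \<bullet> y)^2 * (a i \<bullet> y)^2" by (simp add: power4_eq_xxxx power2_eq_square)
    also have "\<dots> \<le> 1 * (a i \<bullet> y)^2" by (rule mult_right_mono[OF h]) simp
    finally show "(a i \<bullet> y)^4 \<le> (a i \<bullet> y)^2" by simp
  qed
  with S show ?thesis by simp
qed

lemma Cf_aj:
  fixes a :: "nat \<Rightarrow> real^'d"
  assumes orth: "\<forall>i<n. \<forall>j<n. a i \<bullet> a j = (if i = j then 1 else 0)" and j: "j < n"
  shows "Cf a n (a j) = 1" "Cf a n (- a j) = 1" "norm (a j) = 1" "norm (- a j) = 1"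
proof -
  have "Cf a n (a j) = (\<Sum>i<n. if i = j then 1 else 0)"
    unfolding Cf_def using orth j by (intro sum.cong refl) auto
  then show "Cf a n (a j) = 1" using j by simp
  then show "Cf a n (- a j) = 1" using Cf_scale[of a n "-1" "a j"] by simp
  show "norm (a j) = 1" using orth j by (simp add: norm_eq_sqrt_inner)
  then show "norm (- a j) = 1" by simp
qed

theorem theorem5p2:
  fixes a :: "nat \<Rightarrow> real^'d" and n :: nat
  assumes "n \<ge> 1"
    and "\<forall>i<n. \<forall>j<n. a i \<bullet> a j = (if i = j then 1 else 0)"
  defines "f \<equiv> (\<lambda>x. tinner (\<lambda>p q r s. \<Sum>i<n. tensor4 (a i) p q r s) (tensor4 x))"
  shows "(\<forall>x. local_max_on f (sphere 0 1) x \<longrightarrow> (\<forall>y\<in>sphere 0 1. f y \<le> f x))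
       \<and> {x. local_max_on f (sphere 0 1) x} = {a i | i. i < n} \<union> {- a i | i. i < n}"
proof -
  note orth = assms(2)
  have fC: "f = Cf a n" unfolding f_def Cf_def by (rule ext) (rule f_eq)
  have dir: "\<exists>j<n. x = a j \<or> x = - a j" if lm: "local_max_on f (sphere 0 1) x" for x
  proof -
    from lm obtain N where xs: "x \<in> sphere 0 1" and N: "openin (top_of_set (sphere 0 1)) N" "x \<in> N"
      "\<forall>y\<in>N. f y \<le> f x" unfolding local_max_on_def by blast
    from N(1,2) obtain e where e: "e > 0" "ball x e \<inter> sphere 0 1 \<subseteq> N"
      unfolding openin_contains_ball by blast
    have loc: "\<forall>y. norm y = 1 \<longrightarrow> dist y x < e \<longrightarrow> Cf a n y \<le> Cf a n x"
    proof (intro allI impI)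
      fix y :: "real^'d" assume "norm y = 1" "dist y x < e"
      then have "y \<in> N" using e(2) by (auto simp: dist_commute)
      then show "Cf a n y \<le> Cf a n x" using N(3) fC by simp
    qed
    have nx: "norm x = 1" using xs by simp
    show ?thesis by (rule main_dir[OF orth assms(1) nx stepK[OF nx e(1) loc]])
  qed
  have conv: "local_max_on f (sphere 0 1) x" if "x \<in> {a i | i. i < n} \<union> {- a i | i. i < n}" for x
  proof -
    from that obtain j where j: "j < n" "x = a j \<or> x = - a j" by blast
    then have fx: "f x = 1" and nx: "norm x = 1" using Cf_aj[OF orth j(1)] fC by auto
    show ?thesis unfolding local_max_on_def
      using nx fx Cf_le1[OF orth] fC by (intro conjI exI[of _ "sphere 0 1"]) auto
  qed
  show ?thesis
  proof (intro conjI allI impI ballI)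
    fix x y assume lm: "local_max_on f (sphere 0 1) x" and y: "y \<in> sphere (0::real^'d) 1"
    from dir[OF lm] obtain j where j: "j < n" "x = a j \<or> x = - a j" by blast
    then have "f x = 1" using Cf_aj[OF orth j(1)] fC by auto
    moreover have "f y \<le> 1" using Cf_le1[OF orth] y fC by simp
    ultimately show "f y \<le> f x" by simp
  next
    show "{x. local_max_on f (sphere 0 1) x} = {a i | i. i < n} \<union> {- a i | i. i < n}"
    proof
      show "{x. local_max_on f (sphere 0 1) x} \<subseteq> {a i | i. i < n} \<union> {- a i | i. i < n}"
        using dir by blast
      show "{a i | i. i < n} \<union> {- a i | i. i < n} \<subseteq> {x. local_max_on f (sphere 0 1) x}"
        using conv by blast
    qed
  qed
qed

end
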